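(* For every nonreal $z\in\mathbb C$ and every vertex $x_0$ with $\ell(x_0)\ge1$ there exists a function $v:\Gamma_{x_0}\to\mathbb C$, not identically zero, such that $(Jv)(x)=zv(x)$ for all $x\in\Gamma_{x_0}\setminus\{x_0\}$. Any such $v$ satisfies $v(x)\ne0$ for all $x\in\Gamma_{x_0}$, and it is unique up to a constant multiple.
   Context: Let $\Gamma$ be an infinite connected tree whose vertices are arranged in levels $\ell(x)\in\{0,1,2,\dots\}$: every vertex $x$ is adjacent to exactly one vertex $x'$ with $\ell(x')=\ell(x)+1$; for $\ell(x)\ge 1$ the set $N_x=\{y:\ y'=x\}$ of neighbours of $x$ on level $\ell(x)-1$ is finite and nonempty; $N_x=\emptyset$ if $\ell(x)=0$; there are no other edges. For $x\in\Gamma$, $\Gamma_x$ is the finite subtree consisting of $x$ and all its descendants. Fix $\lambda_x>0$, $\beta_x\in\mathbb R$. The Jacobi matrix $J$ acts on functions $v$ by $(Jv)(x)=\lambda_x v(x')+\beta_x v(x)+\sum_{y\in N_x}\lambda_y v(y)$. *)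

theory Defs
  imports Complex_Main
begin

text \<open>A levelled tree: vertices of type 'v, level function lev, and the unique
upper neighbour par x (written x' in the paper).  The edges are exactly
{x, par x}.\<close>

definition children :: "('v \<Rightarrow> 'v) \<Rightarrow> 'v \<Rightarrow> 'v set" where
  "children par x = {y. par y = x}"

definition level_tree :: "('v \<Rightarrow> nat) \<Rightarrow> ('v \<Rightarrow> 'v) \<Rightarrow> bool" where
  "level_tree lev par \<longleftrightarrow>
     (\<forall>x. lev (par x) = lev x + 1) \<and>
     (\<forall>x. lev x \<ge> 1 \<longrightarrow> finite (children par x) \<and> children par x \<noteq> {}) \<and>
     (\<forall>x. lev x = 0 \<longrightarrow> children par x = {}) \<and>
     (\<forall>x y. \<exists>m n. (par ^^ m) x = (par ^^ n) y)"

definition subtree :: "('v \<Rightarrow> 'v) \<Rightarrow> 'v \<Rightarrow> 'v set" where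
  "subtree par x = {y. \<exists>n. (par ^^ n) y = x}"

definition jacobi :: "('v \<Rightarrow> 'v) \<Rightarrow> ('v \<Rightarrow> real) \<Rightarrow> ('v \<Rightarrow> real)
    \<Rightarrow> ('v \<Rightarrow> complex) \<Rightarrow> 'v \<Rightarrow> complex" where
  "jacobi par lam beta v x =
     complex_of_real (lam x) * v (par x) + complex_of_real (beta x) * v x
     + (\<Sum>y\<in>children par x. complex_of_real (lam y) * v y)"

text \<open>v is a solution of (Jv)(x) = z v(x) on Gamma_{x0} minus {x0}, not identically
zero on Gamma_{x0} (values of v outside Gamma_{x0} are irrelevant).\<close>
definition sub_solution :: "('v \<Rightarrow> 'v) \<Rightarrow> ('v \<Rightarrow> real) \<Rightarrow> ('v \<Rightarrow> real)
    \<Rightarrow> complex \<Rightarrow> 'v \<Rightarrow> ('v \<Rightarrow> complex) \<Rightarrow> bool" where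
  "sub_solution par lam beta z x0 v \<longleftrightarrow>
     (\<exists>x\<in>subtree par x0. v x \<noteq> 0) \<and>
     (\<forall>x\<in>subtree par x0 - {x0}. jacobi par lam beta v x = z * v x)"

end

theory Submission imports Defs begin

lemma lev_funpow:
  assumes "\<forall>x. lev (par x) = lev x + (1::nat)"
  shows "lev ((par^^n) y) = lev y + n"
  using assms by (induction n) auto

lemma LT_D1: "level_tree lev par \<Longrightarrow> \<forall>x. lev (par x) = lev x + 1"
  unfolding level_tree_def by (elim conjE) assumption
lemma LT_D2: "level_tree lev par \<Longrightarrow> \<forall>x. lev x \<ge> 1 \<longrightarrow> finite (children par x) \<and> children par x \<noteq> {}"
  unfolding level_tree_def by (elim conjE) assumption
lemma LT_D3: "level_tree lev par \<Longrightarrow> \<forall>x. lev x = 0 \<longrightarrow> children par x = {}"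
  unfolding level_tree_def by (elim conjE) assumption
lemma LT_lev: "level_tree lev par \<Longrightarrow> lev (par x) = lev x + 1"
  using LT_D1 by blast

lemma finite_children: "level_tree lev par \<Longrightarrow> finite (children par y)"
proof -
  assume "level_tree lev par"
  then have a: "\<forall>x. 1 \<le> lev x \<longrightarrow> finite (children par x) \<and> children par x \<noteq> {}"
     and b: "\<forall>x. lev x = 0 \<longrightarrow> children par x = {}" using LT_D2 LT_D3 by blast+
  show ?thesis
  proof (cases "lev y = 0")
    case True then show ?thesis using b by simp
  next
    case False then show ?thesis using a by simp
  qed
qed

lemma subtree_self[simp]: "x \<in> subtree par x"
proof -
  have "(par^^0) x = x" by simp
  then show ?thesis unfolding subtree_def by blast
qed

lemma subtree_par: "y \<in> subtree par x \<Longrightarrow> y \<noteq> x \<Longrightarrow> par y \<in> subtree par x"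
  unfolding subtree_def
proof -
  assume "y \<in> {y. \<exists>n. (par ^^ n) y = x}" "y \<noteq> x"
  then obtain n where n: "(par^^n) y = x" by auto
  with \<open>y \<noteq> x\<close> obtain m where "n = Suc m" by (cases n) auto
  with n have "(par^^m) (par y) = x" by (simp add: funpow_Suc_right del: funpow.simps)
  then show "par y \<in> {y. \<exists>n. (par ^^ n) y = x}" by auto
qed

lemma subtree_child: "par w \<in> subtree par x \<Longrightarrow> w \<in> subtree par x"
  unfolding subtree_def
proof -
  assume "par w \<in> {y. \<exists>n. (par ^^ n) y = x}"
  then obtain n where n: "(par^^n) (par w) = x" by auto
  then have "(par^^Suc n) w = x" by (simp add: funpow_Suc_right del: funpow.simps)
  then show "w \<in> {y. \<exists>n. (par ^^ n) y = x}" by blast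
qed

lemma subtree_trans: "y \<in> subtree par c \<Longrightarrow> c \<in> subtree par x \<Longrightarrow> y \<in> subtree par x"
  unfolding subtree_def
proof -
  assume "y \<in> {y. \<exists>n. (par ^^ n) y = c}" "c \<in> {y. \<exists>n. (par ^^ n) y = x}"
  then obtain m n where "(par^^m) y = c" "(par^^n) c = x" by auto
  then have "(par^^(n+m)) y = x" by (simp add: funpow_add)
  then show "y \<in> {y. \<exists>n. (par ^^ n) y = x}" by blast
qed

lemma subtree_lev:
  assumes "level_tree lev par" "y \<in> subtree par x"
  shows "\<exists>n. lev x = lev y + n \<and> (par^^n) y = x"
proof -
  obtain n where n: "(par^^n) y = x" using assms(2) unfolding subtree_def by auto
  have "lev ((par^^n) y) = lev y + n"
    by (rule lev_funpow) (use LT_D1[OF assms(1)] in simp)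
  then show ?thesis using n by auto
qed

lemma subtree_lev_le: "level_tree lev par \<Longrightarrow> y \<in> subtree par x \<Longrightarrow> lev y \<le> lev x"
proof -
  assume a: "level_tree lev par" "y \<in> subtree par x"
  obtain n where n: "lev x = lev y + n" using subtree_lev[OF a] by blast
  then show ?thesis by simp
qed

lemma subtree_lev_less: "level_tree lev par \<Longrightarrow> y \<in> subtree par x \<Longrightarrow> y \<noteq> x \<Longrightarrow> lev y < lev x"
proof -
  assume a: "level_tree lev par" "y \<in> subtree par x" "y \<noteq> x"
  obtain n where n: "lev x = lev y + n" "(par^^n) y = x" using subtree_lev[OF a(1) a(2)] by blast
  have "n \<noteq> 0"
  proof
    assume "n = 0" then show False using n(2) a(3) by simp
  qed
  then show ?thesis using n by simp
qed

lemma subtree_decomp: "subtree par x = insert x (\<Union>c\<in>children par x. subtree par c)"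
proof (intro equalityI subsetI)
  fix y assume "y \<in> subtree par x"
  then obtain n where n: "(par^^n) y = x" unfolding subtree_def by auto
  show "y \<in> insert x (\<Union>c\<in>children par x. subtree par c)"
  proof (cases n)
    case 0 then show ?thesis using n by simp
  next
    case (Suc m)
    then have "par ((par^^m) y) = x" using n by simp
    then have c: "(par^^m) y \<in> children par x" unfolding children_def by simp
    have "y \<in> subtree par ((par^^m) y)" unfolding subtree_def by blast
    then show ?thesis using c by blast
  qed
next
  fix y assume "y \<in> insert x (\<Union>c\<in>children par x. subtree par c)"
  then show "y \<in> subtree par x"
  proof
    assume "y \<in> (\<Union>c\<in>children par x. subtree par c)"
    then obtain c where c: "par c = x" "y \<in> subtree par c" unfolding children_def by auto
    have "c \<in> subtree par x" using c(1) subtree_child[where w=c and x=x] subtree_self[where x=x] by simp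
    then show ?thesis using subtree_trans[OF c(2)] by simp
  qed simp
qed

lemma finite_subtree:
  assumes LT: "level_tree lev par" shows "finite (subtree par x)"
proof (induction "lev x" arbitrary: x rule: less_induct)
  case less
  have lt: "lev c < lev x" if "c \<in> children par x" for c
  proof -
    have "par c = x" using that by (simp add: children_def)
    then show ?thesis using LT_lev[OF LT, of c] by simp
  qed
  have "finite (\<Union>c\<in>children par x. subtree par c)"
    by (rule finite_UN_I[OF finite_children[OF LT]]) (rule less[OF lt], assumption)
  then show ?case by (subst subtree_decomp) simp
qed

lemma subtree_sub:
  "level_tree lev par \<Longrightarrow> y \<in> subtree par x \<Longrightarrow> subtree par y - {y} \<subseteq> subtree par x - {x}"
proof
  fix w assume LT: "level_tree lev par" and y: "y \<in> subtree par x" and w: "w \<in> subtree par y - {y}"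
  have "lev w < lev y" using subtree_lev_less[OF LT] w by simp
  moreover have "lev y \<le> lev x" using subtree_lev_le[OF LT y] .
  moreover have "w \<in> subtree par x" using subtree_trans[OF _ y] w by simp
  ultimately show "w \<in> subtree par x - {x}" by auto
qed

lemma jacobi_local:
  assumes "\<And>w. w = par y \<or> w = y \<or> w \<in> children par y \<Longrightarrow> v w = a * u w"
  shows "jacobi par lam beta v y = a * jacobi par lam beta u y"
proof -
  have "(\<Sum>w\<in>children par y. complex_of_real (lam w) * v w) = a * (\<Sum>w\<in>children par y. complex_of_real (lam w) * u w)"
    unfolding sum_distrib_left by (rule sum.cong) (auto simp: assms)
  then show ?thesis unfolding jacobi_def using assms by (simp add: algebra_simps)
qed

lemma jacobi_diff:
  "jacobi par lam beta (\<lambda>y. w y - c * v y) x = jacobi par lam beta w x - c * jacobi par lam beta v x"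
  by (simp add: jacobi_def sum_subtractf sum_distrib_left algebra_simps)

lemma zero_lemma:
  assumes LT: "level_tree lev par" and Imz: "Im z \<noteq> 0" and v0: "v x = 0"
    and eq: "\<forall>y\<in>subtree par x - {x}. jacobi par lam beta v y = z * v y"
  shows "\<forall>y\<in>subtree par x. v y = 0"
proof -
  define G where "G = subtree par x"
  have fin: "finite G" unfolding G_def by (rule finite_subtree[OF LT])
  define A where "A = (\<Sum>y\<in>G. of_real (lam y) * cnj (v y) * v (par y))"
  define B where "B = (\<Sum>y\<in>G. \<Sum>w\<in>children par y. of_real (lam w) * cnj (v y) * v w)"
  define R where "R = (\<Sum>y\<in>G. of_real (beta y) * cnj (v y) * v y)"
  have S1: "(\<Sum>y\<in>G. cnj (v y) * jacobi par lam beta v y) = z * (\<Sum>y\<in>G. cnj (v y) * v y)"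
    unfolding sum_distrib_left
  proof (rule sum.cong)
    fix y assume "y \<in> G"
    then show "cnj (v y) * jacobi par lam beta v y = z * (cnj (v y) * v y)"
      using eq v0 unfolding G_def by (cases "y = x") auto
  qed simp
  have S2: "(\<Sum>y\<in>G. cnj (v y) * jacobi par lam beta v y) = A + R + B"
    unfolding A_def R_def B_def jacobi_def
    by (simp add: sum.distrib sum_distrib_left algebra_simps)
  define G' where "G' = {w\<in>G. par w \<in> G}"
  have "B = (\<Sum>y\<in>G. \<Sum>w\<in>{w\<in>G'. par w = y}. of_real (lam w) * cnj (v (par w)) * v w)"
    unfolding B_def
  proof (rule sum.cong[OF refl])
    fix y assume y: "y \<in> G"
    have "children par y = {w\<in>G'. par w = y}"
      using y unfolding children_def G'_def G_def by (auto intro: subtree_child)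
    then show "(\<Sum>w\<in>children par y. of_real (lam w) * cnj (v y) * v w) =
      (\<Sum>w\<in>{w\<in>G'. par w = y}. of_real (lam w) * cnj (v (par w)) * v w)"
      by simp
  qed
  also have "\<dots> = (\<Sum>w\<in>G'. of_real (lam w) * cnj (v (par w)) * v w)"
    by (rule sum.group) (use fin in \<open>auto simp: G'_def\<close>)
  also have "\<dots> = (\<Sum>w\<in>G. of_real (lam w) * cnj (v (par w)) * v w)"
  proof (rule sum.mono_neutral_left[OF fin])
    show "G' \<subseteq> G" unfolding G'_def by auto
    show "\<forall>i\<in>G - G'. of_real (lam i) * cnj (v (par i)) * v i = 0"
      using v0 subtree_par unfolding G'_def G_def by fastforce
  qed
  also have "\<dots> = cnj A" unfolding A_def by (simp add: cnj_sum mult_ac)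
  finally have B: "B = cnj A" .
  have nsq: "cnj (v y) * v y = of_real ((cmod (v y))^2)" for y
    using complex_norm_square[of "v y"] by (simp add: mult.commute)
  have "R = of_real (\<Sum>y\<in>G. beta y * (cmod (v y))^2)"
    unfolding R_def by (simp add: nsq mult.assoc)
  then have ImR: "Im R = 0" by simp
  have "Im (A + R + B) = 0" using ImR B by simp
  moreover have "(\<Sum>y\<in>G. cnj (v y) * v y) = of_real (\<Sum>y\<in>G. (cmod (v y))^2)"
    by (simp only: nsq of_real_sum)
  moreover have "A + R + B = z * (\<Sum>y\<in>G. cnj (v y) * v y)"
    by (simp only: S2[symmetric] S1)
  ultimately have "Im (z * of_real (\<Sum>y\<in>G. (cmod (v y))^2)) = 0"
    by simp
  then have "(\<Sum>y\<in>G. (cmod (v y))^2) = 0" using Imz by simp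
  then have "\<forall>y\<in>G. (cmod (v y))^2 = 0"
    by (subst (asm) sum_nonneg_eq_0_iff[OF fin]) auto
  then show ?thesis unfolding G_def by simp
qed

lemma nonvanish:
  assumes LT: "level_tree lev par" and lam: "\<And>x. lam x > 0" and Imz: "Im z \<noteq> 0"
    and eq: "\<forall>y\<in>subtree par x0 - {x0}. jacobi par lam beta v y = z * v y"
    and y: "y \<in> subtree par x0" and vy: "v y = 0"
  shows "\<forall>w\<in>subtree par x0. v w = 0"
proof -
  have "\<forall>y. y \<in> subtree par x0 \<longrightarrow> lev x0 - lev y = k \<longrightarrow> v y = 0 \<longrightarrow> (\<forall>w\<in>subtree par x0. v w = 0)" for k
  proof (induction k)
    case 0
    show ?case
    proof (intro allI impI)
      fix y assume y: "y \<in> subtree par x0" "lev x0 - lev y = 0" "v y = 0"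
      have "y = x0"
      proof (rule ccontr)
        assume "y \<noteq> x0"
        then show False using subtree_lev_less[OF LT y(1)] y(2) by simp
      qed
      then show "\<forall>w\<in>subtree par x0. v w = 0" using zero_lemma[OF LT Imz _ eq] y by simp
    qed
  next
    case (Suc m)
    show ?case
    proof (intro allI impI)
      fix y assume y: "y \<in> subtree par x0" "lev x0 - lev y = Suc m" "v y = 0"
      then have yx: "y \<noteq> x0" by auto
      have eqy: "\<forall>w\<in>subtree par y - {y}. jacobi par lam beta v w = z * v w"
        using eq subtree_sub[OF LT y(1)] by blast
      have zy: "\<forall>w\<in>subtree par y. v w = 0" using zero_lemma[OF LT Imz y(3) eqy] .
      have ch: "\<forall>w\<in>children par y. v w = 0"
      proof
        fix w assume "w \<in> children par y"
        then have "par w = y" by (simp add: children_def)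
        then have "w \<in> subtree par y" using subtree_child[where w=w and x=y] by simp
        then show "v w = 0" using zy by blast
      qed
      have "jacobi par lam beta v y = z * v y" using eq y(1) yx by blast
      moreover have "(\<Sum>w\<in>children par y. complex_of_real (lam w) * v w) = 0"
        using ch by (intro sum.neutral) simp
      ultimately have "of_real (lam y) * v (par y) = 0" using y(3) unfolding jacobi_def by simp
      then have vp: "v (par y) = 0" using lam[of y] by simp
      have py: "par y \<in> subtree par x0" using subtree_par[OF y(1) yx] .
      have "lev x0 - lev (par y) = m" using y(2) LT_lev[OF LT, of y] by simp
      then show "\<forall>w\<in>subtree par x0. v w = 0" using Suc.IH py vp by blast
    qed
  qed
  then show ?thesis using y vy by blast
qed

lemma existence:
  assumes LT: "level_tree lev par" and lam: "\<And>x. lam x > 0" and Imz: "Im z \<noteq> 0"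
  shows "\<exists>v. v x = 1 \<and> (\<forall>y\<in>subtree par x - {x}. jacobi par lam beta v y = z * v y)"
proof (induction "lev x" arbitrary: x rule: less_induct)
  case less
  have "\<forall>c\<in>children par x. \<exists>V. V c = 1 \<and> (\<forall>y\<in>subtree par c - {c}. jacobi par lam beta V y = z * V y)"
  proof
    fix c assume "c \<in> children par x"
    then have "lev c < lev x" using LT_lev[OF LT, of c] unfolding children_def by simp
    then show "\<exists>V. V c = 1 \<and> (\<forall>y\<in>subtree par c - {c}. jacobi par lam beta V y = z * V y)"
      using less by blast
  qed
  then obtain V where V: "\<And>c. c \<in> children par x \<Longrightarrow> V c c = 1 \<and> (\<forall>y\<in>subtree par c - {c}. jacobi par lam beta (V c) y = z * V c y)"
    by metis
  define D where "D c = of_real (beta c) - z + (\<Sum>w\<in>children par c. of_real (lam w) * V c w)" for c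
  have xnot: "x \<notin> subtree par c" if "c \<in> children par x" for c
    using that subtree_lev_le[OF LT, of x c] LT_lev[OF LT, of c] unfolding children_def by auto
  have chsub: "children par y \<subseteq> subtree par c" if "y \<in> subtree par c" for y c
    using that subtree_child[where x=c] unfolding children_def by auto
  have Dnz: "D c \<noteq> 0" if c: "c \<in> children par x" for c
  proof
    assume D0: "D c = 0"
    define u where "u y = (if y \<in> subtree par c then V c y else 0)" for y
    have pc: "par c = x" using c unfolding children_def by simp
    have equ: "jacobi par lam beta u y = z * u y" if yx: "y \<noteq> x" for y
    proof (cases "y \<in> subtree par c")
      case True
      show ?thesis
      proof (cases "y = c")
        case True
        have "jacobi par lam beta u c = of_real (beta c) + (\<Sum>w\<in>children par c. of_real (lam w) * V c w)"
          unfolding jacobi_def using xnot[OF c] pc V[OF c] chsub[of c c]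
          by (auto simp: u_def intro!: sum.cong)
        also have "\<dots> = z" using D0 unfolding D_def by (simp add: algebra_simps)
        finally show ?thesis using True V[OF c] by (simp add: u_def)
      next
        case False
        have "jacobi par lam beta u y = 1 * jacobi par lam beta (V c) y"
          by (rule jacobi_local) (use \<open>y \<in> subtree par c\<close> False chsub[of y c] subtree_par[where y=y and x=c] in \<open>auto simp: u_def\<close>)
        then show ?thesis using V[OF c] False \<open>y \<in> subtree par c\<close> by (simp add: u_def)
      qed
    next
      case False
      have "par y \<notin> subtree par c"
      proof
        assume "par y \<in> subtree par c"
        then have "y \<in> subtree par c" by (rule subtree_child)
        with False show False by simp
      qed
      moreover have "w \<notin> subtree par c" if "w \<in> children par y" for w
      proof
        assume w: "w \<in> subtree par c"
        have pw: "par w = y" using that unfolding children_def by simp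
        show False
        proof (cases "w = c")
          case True then show False using pw pc yx by simp
        next
          case False then show False using subtree_par[OF w False] pw \<open>y \<notin> subtree par c\<close> by simp
        qed
      qed
      ultimately show ?thesis using False unfolding jacobi_def u_def by simp
    qed
    have "\<forall>y\<in>subtree par x. u y = 0"
    proof (rule zero_lemma[where lam=lam and beta=beta, OF LT Imz])
      show "u x = 0" using xnot[OF c] by (simp add: u_def)
      show "\<forall>y\<in>subtree par x - {x}. jacobi par lam beta u y = z * u y" using equ by blast
    qed
    moreover have "c \<in> subtree par x" using pc subtree_child[where w=c and x=x] subtree_self[where x=x] by simp
    ultimately have "u c = 0" by blast
    moreover have "u c = 1" using V[OF c] subtree_self[where x=c and par=par] by (simp add: u_def)
    ultimately show False by simp
  qed
  define a where "a c = - of_real (lam c) / D c" for c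
  have aD: "a c * D c = - of_real (lam c)" if "c \<in> children par x" for c
    using Dnz[OF that] unfolding a_def by simp
  define cof where "cof y = (par^^(lev x - lev y - 1)) y" for y
  have cof: "cof y = c" if c: "c \<in> children par x" and y: "y \<in> subtree par c" for y c
  proof -
    obtain n where n: "lev c = lev y + n" "(par^^n) y = c" using subtree_lev[OF LT y] by blast
    have "lev x = lev c + 1" using c LT_lev[OF LT, of c] unfolding children_def by auto
    then show ?thesis using n unfolding cof_def by simp
  qed
  define v where "v y = (if y = x then 1 else a (cof y) * V (cof y) y)" for y
  have vc: "v y = a c * V c y" if c: "c \<in> children par x" and y: "y \<in> subtree par c" for y c
    using cof[OF c y] xnot[OF c] y unfolding v_def by auto
  have "\<forall>y\<in>subtree par x - {x}. jacobi par lam beta v y = z * v y"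
  proof
    fix y assume y: "y \<in> subtree par x - {x}"
    then obtain c where c: "c \<in> children par x" and yc: "y \<in> subtree par c"
      using subtree_decomp[of par x] by auto
    have pc: "par c = x" using c unfolding children_def by simp
    show "jacobi par lam beta v y = z * v y"
    proof (cases "y = c")
      case True
      have "jacobi par lam beta v c = of_real (lam c) + a c * (of_real (beta c) + (\<Sum>w\<in>children par c. of_real (lam w) * V c w))"
      proof -
        have s: "(\<Sum>w\<in>children par c. of_real (lam w) * v w) = a c * (\<Sum>w\<in>children par c. of_real (lam w) * V c w)"
          unfolding sum_distrib_left by (rule sum.cong) (use chsub[of c c] vc[OF c] in auto)
        have "v c = a c" using vc[OF c, of c] V[OF c] by simp
        then show ?thesis unfolding jacobi_def s using pc by (simp add: v_def algebra_simps)
      qed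
      also have "\<dots> = of_real (lam c) + a c * D c + z * a c" unfolding D_def by (simp add: algebra_simps)
      also have "\<dots> = z * a c" using aD[OF c] by simp
      also have "\<dots> = z * v c" using vc[OF c, of c] V[OF c] by simp
      finally show ?thesis using True by simp
    next
      case False
      have "jacobi par lam beta v y = a c * jacobi par lam beta (V c) y"
        by (rule jacobi_local) (use yc False chsub[of y c] subtree_par[where y=y and x=c] vc[OF c] in auto)
      then show ?thesis using V[OF c] False yc vc[OF c yc] by simp
    qed
  qed
  moreover have "v x = 1" by (simp add: v_def)
  ultimately show ?case by blast
qed

theorem lemma3:
  fixes lev :: "'v \<Rightarrow> nat" and par :: "'v \<Rightarrow> 'v"
    and lam beta :: "'v \<Rightarrow> real" and z :: complex and x0 :: 'v
  assumes "level_tree lev par"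
    and "\<And>x. lam x > 0"
    and "Im z \<noteq> 0"
    and "lev x0 \<ge> 1"
  shows "(\<exists>v. sub_solution par lam beta z x0 v)
       \<and> (\<forall>v. sub_solution par lam beta z x0 v \<longrightarrow> (\<forall>x\<in>subtree par x0. v x \<noteq> 0))
       \<and> (\<forall>v w. sub_solution par lam beta z x0 v \<and> sub_solution par lam beta z x0 w
              \<longrightarrow> (\<exists>c. \<forall>x\<in>subtree par x0. w x = c * v x))"
proof (intro conjI allI impI)
  obtain v where v: "v x0 = 1" "\<forall>y\<in>subtree par x0 - {x0}. jacobi par lam beta v y = z * v y"
    using existence[where x=x0 and beta=beta and lam=lam, OF assms(1-3)] by blast
  have "x0 \<in> subtree par x0" by simp
  then have "\<exists>x\<in>subtree par x0. v x \<noteq> 0" using v(1) by (intro bexI[of _ x0]) simp_all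
  then have "sub_solution par lam beta z x0 v" unfolding sub_solution_def using v(2) by blast
  then show "\<exists>v. sub_solution par lam beta z x0 v" by blast
next
  fix v assume "sub_solution par lam beta z x0 v"
  then have ex: "\<exists>x\<in>subtree par x0. v x \<noteq> 0"
    and eq: "\<forall>y\<in>subtree par x0 - {x0}. jacobi par lam beta v y = z * v y"
    unfolding sub_solution_def by blast+
  show "\<forall>x\<in>subtree par x0. v x \<noteq> 0"
  proof (intro ballI notI)
    fix y assume "y \<in> subtree par x0" "v y = 0"
    then have "\<forall>w\<in>subtree par x0. v w = 0" by (rule nonvanish[where lam=lam, OF assms(1-3) eq])
    then show False using ex by blast
  qed
next
  fix v w assume vw: "sub_solution par lam beta z x0 v \<and> sub_solution par lam beta z x0 w"
  then have ex: "\<exists>x\<in>subtree par x0. v x \<noteq> 0"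
    and eqv: "\<forall>y\<in>subtree par x0 - {x0}. jacobi par lam beta v y = z * v y"
    and eqw: "\<forall>y\<in>subtree par x0 - {x0}. jacobi par lam beta w y = z * w y"
    unfolding sub_solution_def by blast+
  have nz: "v x0 \<noteq> 0"
  proof
    assume "v x0 = 0"
    then have "\<forall>y\<in>subtree par x0. v y = 0" by (rule nonvanish[where lam=lam, OF assms(1-3) eqv subtree_self])
    then show False using ex by blast
  qed
  define c where "c = w x0 / v x0"
  have "\<forall>y\<in>subtree par x0. w y - c * v y = 0"
  proof (rule zero_lemma[where lam=lam and beta=beta, OF assms(1) assms(3)])
    show "w x0 - c * v x0 = 0" using nz by (simp add: c_def)
    show "\<forall>y\<in>subtree par x0 - {x0}. jacobi par lam beta (\<lambda>y. w y - c * v y) y = z * (w y - c * v y)"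
    proof
      fix y assume "y \<in> subtree par x0 - {x0}"
      then show "jacobi par lam beta (\<lambda>y. w y - c * v y) y = z * (w y - c * v y)"
        using eqv eqw by (simp add: jacobi_diff algebra_simps)
    qed
  qed
  then show "\<exists>c. \<forall>x\<in>subtree par x0. w x = c * v x" by auto
qed

end
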